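(* Let $0=p_0<p_1<\cdots<p_M<p_{M+1}=1$, fix a labelled sample $\{(\bm x_j,y_j)\}_{j=1}^N$, and let $c^*$ be a risk model whose $\mathrm{AUNBC}$ is maximal among all risk models on this sample. Then there exist a risk model $c'$ (possibly $c'=c^*$) with $\mathrm{AUNBC}(c')=\mathrm{AUNBC}(c^* )$ and real numbers $q_0,\dots,q_M$ with $q_i\in G_i$ for every $i$, such that $q_iN_i(c')=O_i(c')$ for all $i=0,1,\dots,M$.
   Context: A risk model is any function $c$ assigning to each sample a value $c(\bm x_j)\in[0,1]$. For $i=0,\dots,M$, $\mathrm{TP}_i(c)=\#\{j:c(\bm x_j)\ge p_i,\ y_j=1\}$, $\mathrm{FP}_i(c)=\#\{j:c(\bm x_j)\ge p_i,\ y_j=0\}$, with $\mathrm{TP}_{M+1}=\mathrm{FP}_{M+1}=0$, and $\mathrm{AUNBC}(c)=\frac1N\sum_{i=0}^M(p_{i+1}-p_i)\big(\mathrm{TP}_i(c)-\mathrm{FP}_i(c)\frac{p_i}{1-p_i}\big)$. The risk groups are $G_i=[p_i,p_{i+1})$ for $i=0,\dots,M-1$ and $G_M=[p_M,1]$; $N_i(c)$ is the number of samples with $c(\bm x_j)\in G_i$ and $O_i(c)$ the number of positive samples with $c(\bm x_j)\in G_i$. *)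

theory Defs
  imports Complex_Main
begin

text \<open>Samples are indexed by j < N, with features x j and labels y j (True = positive).
  Thresholds p 0, ..., p (M+1).\<close>

definition risk_model :: "('a \<Rightarrow> real) \<Rightarrow> bool" where
  "risk_model c \<longleftrightarrow> (\<forall>z. 0 \<le> c z \<and> c z \<le> 1)"

definition TP :: "(nat \<Rightarrow> real) \<Rightarrow> nat \<Rightarrow> (nat \<Rightarrow> 'a) \<Rightarrow> (nat \<Rightarrow> bool) \<Rightarrow> ('a \<Rightarrow> real) \<Rightarrow> nat \<Rightarrow> nat" where
  "TP p N x y c i = card {j. j < N \<and> c (x j) \<ge> p i \<and> y j}"

definition FP :: "(nat \<Rightarrow> real) \<Rightarrow> nat \<Rightarrow> (nat \<Rightarrow> 'a) \<Rightarrow> (nat \<Rightarrow> bool) \<Rightarrow> ('a \<Rightarrow> real) \<Rightarrow> nat \<Rightarrow> nat" where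
  "FP p N x y c i = card {j. j < N \<and> c (x j) \<ge> p i \<and> \<not> y j}"

definition AUNBC :: "(nat \<Rightarrow> real) \<Rightarrow> nat \<Rightarrow> nat \<Rightarrow> (nat \<Rightarrow> 'a) \<Rightarrow> (nat \<Rightarrow> bool) \<Rightarrow> ('a \<Rightarrow> real) \<Rightarrow> real" where
  "AUNBC p M N x y c = (1 / real N) * (\<Sum>i\<le>M. (p (i+1) - p i) *
      (real (TP p N x y c i) - real (FP p N x y c i) * (p i / (1 - p i))))"

definition risk_group :: "(nat \<Rightarrow> real) \<Rightarrow> nat \<Rightarrow> nat \<Rightarrow> real set" where
  "risk_group p M i = (if i < M then {p i..<p (i+1)} else {p M..1})"

definition Ngrp :: "(nat \<Rightarrow> real) \<Rightarrow> nat \<Rightarrow> nat \<Rightarrow> (nat \<Rightarrow> 'a) \<Rightarrow> ('a \<Rightarrow> real) \<Rightarrow> nat \<Rightarrow> nat" where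
  "Ngrp p M N x c i = card {j. j < N \<and> c (x j) \<in> risk_group p M i}"

definition Ogrp :: "(nat \<Rightarrow> real) \<Rightarrow> nat \<Rightarrow> nat \<Rightarrow> (nat \<Rightarrow> 'a) \<Rightarrow> (nat \<Rightarrow> bool) \<Rightarrow> ('a \<Rightarrow> real) \<Rightarrow> nat \<Rightarrow> nat" where
  "Ogrp p M N x y c i = card {j. j < N \<and> c (x j) \<in> risk_group p M i \<and> y j}"

end

theory Submission
  imports Defs
begin

definition rr :: "nat \<Rightarrow> (nat \<Rightarrow> 'a) \<Rightarrow> (nat \<Rightarrow> bool) \<Rightarrow> 'a \<Rightarrow> real" where
  "rr N x y z = real (card {j. j < N \<and> x j = z \<and> y j}) / real (card {j. j < N \<and> x j = z})"

lemma card_sum_ind: "real (card {j. j < (N::nat) \<and> P j}) = (\<Sum>j<N. if P j then 1 else 0)"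
proof (induction N)
  case 0 then show ?case by simp
next
  case (Suc N)
  have "{j. j < Suc N \<and> P j} = (if P N then insert N {j. j < N \<and> P j} else {j. j < N \<and> P j})"
    by (auto simp: less_Suc_eq)
  then show ?case using Suc by simp
qed

lemma rr_range: "0 \<le> rr N x y z \<and> rr N x y z \<le> 1"
proof -
  have "card {j. j < N \<and> x j = z \<and> y j} \<le> card {j. j < N \<and> x j = z}"
    by (rule card_mono) auto
  then show ?thesis unfolding rr_def
    by (cases "card {j. j < N \<and> x j = z} = 0") (auto simp: divide_le_eq_1)
qed

lemma lemA: "(\<Sum>j<N. g (x j) * (if y j then 1 else 0)) = (\<Sum>j<N. g (x j) * rr N x y (x j))"
proof -
  have L: "(\<Sum>j<N. g (x j) * (if y j then 1 else 0)) =
     (\<Sum>z\<in>x ` {..<N}. \<Sum>j\<in>{j\<in>{..<N}. x j = z}. g (x j) * (if y j then 1 else 0))"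
    by (rule sum.image_gen) simp
  have R: "(\<Sum>j<N. g (x j) * rr N x y (x j)) =
     (\<Sum>z\<in>x ` {..<N}. \<Sum>j\<in>{j\<in>{..<N}. x j = z}. g (x j) * rr N x y (x j))"
    by (rule sum.image_gen) simp
  have "(\<Sum>j\<in>{j\<in>{..<N}. x j = z}. g (x j) * (if y j then 1 else 0)) =
        (\<Sum>j\<in>{j\<in>{..<N}. x j = z}. g (x j) * rr N x y (x j))" if z: "z \<in> x ` {..<N}" for z
  proof -
    define S where "S = {j. j < N \<and> x j = z}"
    have Sfin: "finite S" unfolding S_def by auto
    have S_eq: "{j\<in>{..<N}. x j = z} = S" unfolding S_def by auto
    have pos: "card S > 0" using z Sfin unfolding S_def by (auto simp: card_gt_0_iff)
    have "(\<Sum>j\<in>S. g (x j) * (if y j then 1 else 0)) = g z * (\<Sum>j\<in>S. if y j then 1 else 0)"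
      by (simp add: S_def sum_distrib_left)
    also have "(\<Sum>j\<in>S. if y j then 1 else 0) = real (card {j\<in>S. y j})"
      using sum.inter_filter[OF Sfin, of "\<lambda>_. 1::real" y] by simp
    also have "{j\<in>S. y j} = {j. j < N \<and> x j = z \<and> y j}" unfolding S_def by auto
    finally have 1: "(\<Sum>j\<in>S. g (x j) * (if y j then 1 else 0)) = g z * real (card {j. j < N \<and> x j = z \<and> y j})" .
    have "(\<Sum>j\<in>S. g (x j) * rr N x y (x j)) = (\<Sum>j\<in>S. g z * rr N x y z)"
      by (rule sum.cong) (auto simp: S_def)
    also have "\<dots> = real (card S) * (g z * rr N x y z)" by simp
    also have "\<dots> = g z * real (card {j. j < N \<and> x j = z \<and> y j})"
      using pos by (simp add: rr_def S_def[symmetric])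
    finally show ?thesis using 1 S_eq by simp
  qed
  then show ?thesis using L R by (metis (no_types, lifting) sum.cong)
qed

lemma p_lt1:
  fixes p :: "nat \<Rightarrow> real"
  assumes pM: "p (M+1) = 1" and pmono: "\<And>i. i \<le> M \<Longrightarrow> p i < p (i+1)" and i: "i \<le> M"
  shows "p i < 1"
proof -
  have "p i \<le> p M" using i
  proof (induction rule: dec_induct)
    case base then show ?case by simp
  next
    case (step n) then show ?case using pmono[of n] by simp
  qed
  then show ?thesis using pmono[of M] pM by simp
qed

lemma TPFP:
  fixes p :: "nat \<Rightarrow> real" and c :: "'a \<Rightarrow> real"
  shows "real (TP p N x y c i) - real (FP p N x y c i) * a =
    (\<Sum>j<N. (if p i \<le> c (x j) then 1 else 0) * ((1 + a) * rr N x y (x j) - a))"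
proof -
  let ?g = "\<lambda>z. if p i \<le> c z then 1 else (0::real)"
  have T: "real (TP p N x y c i) = (\<Sum>j<N. ?g (x j) * (if y j then 1 else 0))"
    unfolding TP_def card_sum_ind by (rule sum.cong) auto
  have F: "real (FP p N x y c i) = (\<Sum>j<N. ?g (x j)) - (\<Sum>j<N. ?g (x j) * (if y j then 1 else 0))"
    unfolding FP_def card_sum_ind sum_subtractf[symmetric] by (rule sum.cong) auto
  have "real (TP p N x y c i) - real (FP p N x y c i) * a =
     (1 + a) * (\<Sum>j<N. ?g (x j) * (if y j then 1 else 0)) - a * (\<Sum>j<N. ?g (x j))"
    unfolding T F by (simp add: algebra_simps)
  also have "\<dots> = (1 + a) * (\<Sum>j<N. ?g (x j) * rr N x y (x j)) - a * (\<Sum>j<N. ?g (x j))"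
    by (simp only: lemA[of "\<lambda>z. if p i \<le> c z then 1 else (0::real)"])
  also have "\<dots> = (\<Sum>j<N. ?g (x j) * ((1 + a) * rr N x y (x j) - a))"
    by (simp add: sum_distrib_left sum_subtractf[symmetric] algebra_simps)
  finally show ?thesis .
qed

lemma termwise:
  fixes pi r v :: real
  assumes "pi < 1"
  shows "(if pi \<le> v then 1 else 0) * ((1 + pi / (1 - pi)) * r - pi / (1 - pi))
       \<le> (if pi \<le> r then 1 else 0) * ((1 + pi / (1 - pi)) * r - pi / (1 - pi))"
proof -
  have d: "1 - pi \<noteq> 0" using assms by simp
  have "1 + pi / (1 - pi) = 1 / (1 - pi)" using d by (simp add: field_simps)
  then have E: "(1 + pi / (1 - pi)) * r - pi / (1 - pi) = (r - pi) / (1 - pi)"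
    by (simp add: diff_divide_distrib)
  show ?thesis unfolding E using assms
    by (auto simp: divide_nonneg_pos divide_nonpos_pos)
qed

theorem corollary2:
  fixes p :: "nat \<Rightarrow> real" and M N :: nat
    and x :: "nat \<Rightarrow> 'a" and y :: "nat \<Rightarrow> bool" and cstar :: "'a \<Rightarrow> real"
  assumes p0: "p 0 = 0" and pM: "p (M+1) = 1"
    and pmono: "\<And>i. i \<le> M \<Longrightarrow> p i < p (i+1)"
    and cstar_rm: "risk_model cstar"
    and cstar_max: "\<And>c. risk_model c \<Longrightarrow> AUNBC p M N x y c \<le> AUNBC p M N x y cstar"
  shows "\<exists>c'. risk_model c' \<and> AUNBC p M N x y c' = AUNBC p M N x y cstar \<and>
           (\<exists>q :: nat \<Rightarrow> real. \<forall>i\<le>M. q i \<in> risk_group p M i \<and>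
               q i * real (Ngrp p M N x c' i) = real (Ogrp p M N x y c' i))"
proof -
  let ?r = "rr N x y"
  let ?a = "\<lambda>i. p i / (1 - p i)"
  have r_rm: "risk_model ?r" unfolding risk_model_def by (simp add: rr_range)
  have ge: "AUNBC p M N x y c \<le> AUNBC p M N x y ?r" for c
  proof -
    have "(\<Sum>i\<le>M. (p (i+1) - p i) * (real (TP p N x y c i) - real (FP p N x y c i) * ?a i))
      \<le> (\<Sum>i\<le>M. (p (i+1) - p i) * (real (TP p N x y ?r i) - real (FP p N x y ?r i) * ?a i))"
    proof (rule sum_mono)
      fix i assume "i \<in> {..M}"
      then have i: "i \<le> M" by simp
      have p1: "p i < 1" using p_lt1[OF pM pmono i] .
      show "(p (i+1) - p i) * (real (TP p N x y c i) - real (FP p N x y c i) * ?a i)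
        \<le> (p (i+1) - p i) * (real (TP p N x y ?r i) - real (FP p N x y ?r i) * ?a i)"
        unfolding TPFP
        by (rule mult_left_mono, rule sum_mono, rule termwise[OF p1]) (use pmono[OF i] in simp)
    qed
    then show ?thesis unfolding AUNBC_def by (rule mult_left_mono) simp
  qed
  have eq: "AUNBC p M N x y ?r = AUNBC p M N x y cstar"
    using ge[of cstar] cstar_max[OF r_rm] by simp
  have grp: "\<exists>q. q \<in> risk_group p M i \<and> q * real (Ngrp p M N x ?r i) = real (Ogrp p M N x y ?r i)"
    if i: "i \<le> M" for i
  proof -
    let ?G = "risk_group p M i"
    let ?h = "\<lambda>z. if ?r z \<in> ?G then 1 else (0::real)"
    have pG: "p i \<in> ?G" using i pmono[OF i] p_lt1[OF pM pmono i] unfolding risk_group_def by auto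
    have Nd: "real (Ngrp p M N x ?r i) = (\<Sum>j<N. ?h (x j))"
      unfolding Ngrp_def card_sum_ind by simp
    have "real (Ogrp p M N x y ?r i) = (\<Sum>j<N. ?h (x j) * (if y j then 1 else 0))"
      unfolding Ogrp_def card_sum_ind by (rule sum.cong) auto
    also have "\<dots> = (\<Sum>j<N. ?h (x j) * ?r (x j))" by (rule lemA)
    finally have Od: "real (Ogrp p M N x y ?r i) = (\<Sum>j<N. ?h (x j) * ?r (x j))" .
    show ?thesis
    proof (cases "Ngrp p M N x ?r i = 0")
      case True
      have "Ogrp p M N x y ?r i \<le> Ngrp p M N x ?r i"
        unfolding Ogrp_def Ngrp_def by (rule card_mono) auto
      then show ?thesis using True pG by (intro exI[of _ "p i"]) simp
    next
      case False
      define Nn where "Nn = real (Ngrp p M N x ?r i)"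
      define On where "On = real (Ogrp p M N x y ?r i)"
      have Npos: "Nn > 0" using False unfolding Nn_def by simp
      have low: "p i * Nn \<le> On"
        unfolding Nn_def On_def Nd Od sum_distrib_left
        by (rule sum_mono) (use i in \<open>auto simp: risk_group_def split: if_splits\<close>)
      have up: "if i < M then On < p (i+1) * Nn else On \<le> Nn"
      proof (cases "i < M")
        case True
        have "0 < (\<Sum>j<N. ?h (x j) * (p (i+1) - ?r (x j)))"
        proof -
          have "Ngrp p M N x ?r i \<noteq> 0" using False .
          then obtain j where j: "j < N" "?r (x j) \<in> ?G"
            unfolding Ngrp_def by (metis (mono_tags, lifting) Collect_empty_eq card.empty)
          show ?thesis
          proof (rule sum_pos2[of _ j])
            show "j \<in> {..<N}" using j by simp
            show "0 < ?h (x j) * (p (i+1) - ?r (x j))" using j True by (simp add: risk_group_def)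
            show "\<And>k. k \<in> {..<N} \<Longrightarrow> 0 \<le> ?h (x k) * (p (i+1) - ?r (x k))"
              using True by (auto simp: risk_group_def)
          qed simp
        qed
        then show ?thesis using True unfolding Nn_def On_def Nd Od
          by (simp add: sum_distrib_left sum_subtractf algebra_simps)
      next
        case False
        have "On \<le> Nn" unfolding Nn_def On_def Nd Od
          by (rule sum_mono) (auto simp: rr_range)
        then show ?thesis using False by simp
      qed
      have "On / Nn \<in> ?G"
      proof (cases "i < M")
        case True
        then show ?thesis using low up Npos unfolding risk_group_def
          by (simp add: pos_le_divide_eq pos_divide_less_eq mult.commute)
      next
        case False
        then have "i = M" using i by simp
        then show ?thesis using low up Npos False unfolding risk_group_def
          by (simp add: pos_le_divide_eq pos_divide_le_eq mult.commute)
      qed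
      then show ?thesis using Npos unfolding Nn_def On_def by (intro exI[of _ "On / Nn"]) (simp add: Nn_def On_def)
    qed
  qed
  show ?thesis
    apply (rule exI[of _ ?r])
    using r_rm eq grp by metis
qed

end
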